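(* Let $k\in\mathbb{Z}$. For every integer $n\ge 1$, $$\frac{2}{n}\sum_{m=1}^{n}\frac{1}{m^{k-1}}S_{1}(n,m)=E_{n-1}^{(k)}(1)+E_{n-1}^{(k)}.$$
   Context: For $k\in\mathbb{Z}$, $\mathrm{Ei}_k(x)=\sum_{n=1}^{\infty}\frac{x^n}{n^k(n-1)!}$. The poly-Genocchi polynomials $G_n^{(k)}(x)$ are defined by $\frac{2\,\mathrm{Ei}_k(\log(1+t))}{e^t+1}e^{xt}=\sum_{n=0}^{\infty}G_n^{(k)}(x)\frac{t^n}{n!}$. The poly-Euler polynomials of index $k$ are $E_n^{(k)}(x)=\frac{G_{n+1}^{(k)}(x)}{n+1}$ for $n\ge0$, and $E_n^{(k)}=E_n^{(k)}(0)$. $S_1(n,m)$ denotes the signed Stirling numbers of the first kind: $\frac{(\log(1+t))^m}{m!}=\sum_{n=m}^{\infty}S_1(n,m)\frac{t^n}{n!}$. *)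

theory Defs
  imports "HOL-Computational_Algebra.Formal_Power_Series"
begin

definition Ei_fps :: "int \<Rightarrow> real fps" where
  "Ei_fps k = Abs_fps (\<lambda>n. if n = 0 then 0 else 1 / ((real n powi k) * fact (n - 1)))"

text \<open>log(1+t) as a formal power series is fps_ln 1.
  Generating function 2 Ei_k(log(1+t)) / (e^t + 1) * e^{xt}.\<close>
definition polyGenocchi_gf :: "int \<Rightarrow> real \<Rightarrow> real fps" where
  "polyGenocchi_gf k x =
     2 * (Ei_fps k oo fps_ln 1) * inverse (fps_exp 1 + 1) * fps_exp x"

definition polyGenocchi :: "int \<Rightarrow> nat \<Rightarrow> real \<Rightarrow> real" where
  "polyGenocchi k n x = fact n * fps_nth (polyGenocchi_gf k x) n"

definition polyEuler :: "int \<Rightarrow> nat \<Rightarrow> real \<Rightarrow> real" where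
  "polyEuler k n x = polyGenocchi k (n + 1) x / real (n + 1)"

text \<open>Signed Stirling numbers of the first kind via (log(1+t))^m/m! = sum_n S1(n,m) t^n/n!.\<close>
definition S1 :: "nat \<Rightarrow> nat \<Rightarrow> real" where
  "S1 n m = fact n * fps_nth ((fps_ln 1) ^ m / fps_const (fact m)) n"

end

theory Submission
  imports Defs
begin

lemma gf_sum: "polyGenocchi_gf k 1 + polyGenocchi_gf k 0 = 2 * (Ei_fps k oo fps_ln 1)"
proof -
  have nz: "fps_nth (fps_exp (1::real) + 1) 0 \<noteq> 0" by simp
  have inv: "inverse (fps_exp (1::real) + 1) * (fps_exp 1 + 1) = 1"
    using inverse_mult_eq_1[OF nz] by simp
  have "polyGenocchi_gf k 1 + polyGenocchi_gf k 0
      = 2 * (Ei_fps k oo fps_ln 1) * (inverse (fps_exp 1 + 1) * (fps_exp 1 + 1))"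
    unfolding polyGenocchi_gf_def by (simp add: algebra_simps)
  then show ?thesis using inv by simp
qed

lemma term_eq:
  fixes k :: int and n i :: nat
  assumes "i \<ge> 1" "n \<ge> 1"
  shows "2 / real n * ((1 / (real i powi (k - 1))) * S1 n i)
       = fact n / real n * (2 * (fps_nth (Ei_fps k) i * fps_nth (fps_ln 1 ^ i) n))"
proof -
  have p: "real i powi k = real i powi (k - 1) * real i"
    using power_int_minus_mult[of "real i" k] assms by simp
  have f: "(fact i :: real) = real i * fact (i - 1)"
    using assms by (metis Suc_diff_1 fact_Suc less_eq_Suc_le of_nat_Suc mult.commute One_nat_def)
  have ei: "fps_nth (Ei_fps k) i = 1 / (real i powi k * fact (i - 1))"
    using assms by (simp add: Ei_fps_def)
  have s: "S1 n i = fact n * fps_nth (fps_ln 1 ^ i) n / fact i"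
    by (simp add: S1_def field_simps)
  show ?thesis unfolding ei s p f using assms by (simp add: field_simps)
qed

theorem corollary2:
  fixes k :: int and n :: nat
  assumes "n \<ge> 1"
  shows "2 / real n * (\<Sum>m = 1..n. (1 / (real m powi (k - 1))) * S1 n m)
           = polyEuler k (n - 1) 1 + polyEuler k (n - 1) 0"
proof -
  have "polyEuler k (n - 1) 1 + polyEuler k (n - 1) 0
      = fact n / real n * fps_nth (polyGenocchi_gf k 1 + polyGenocchi_gf k 0) n"
    using assms by (simp add: polyEuler_def polyGenocchi_def field_simps)
  also have "\<dots> = fact n / real n * (2 * (\<Sum>i=0..n. fps_nth (Ei_fps k) i * fps_nth (fps_ln 1 ^ i) n))"
    unfolding gf_sum by (simp add: fps_compose_nth numeral_fps_const)
  also have "(\<Sum>i=0..n. fps_nth (Ei_fps k) i * fps_nth (fps_ln 1 ^ i) n) = (\<Sum>i=1..n. fps_nth (Ei_fps k) i * fps_nth (fps_ln (1::real) ^ i) n)"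
    by (simp add: sum.atLeast_Suc_atMost Ei_fps_def)
  also have "fact n / real n * (2 * \<dots>) = (\<Sum>i=1..n. fact n / real n * (2 * (fps_nth (Ei_fps k) i * fps_nth (fps_ln 1 ^ i) n)))"
    by (simp add: sum_distrib_left)
  also have "\<dots> = (\<Sum>i=1..n. 2 / real n * ((1 / (real i powi (k - 1))) * S1 n i))"
    using assms by (intro sum.cong refl, subst term_eq) auto
  finally show ?thesis by (simp add: sum_distrib_left)
qed

end
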